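(* Let $n\ge 0$ be an integer. Then for every real $r$ with $|r|>1$, $$\int_{-1}^1 \frac{U_n(s)(1-s^2)^{\frac{3}{2}}}{(s-r)^3}\,ds = \frac{\pi}{2}\left[(n^2+2n+3)-3(n+1)\frac{|r|}{\sqrt{r^2-1}}\right]\left(r-\frac{|r|}{r}\sqrt{r^2-1}\right)^{n+1}.$$
   Context: $U_k(s)=\frac{\sin((k+1)\cos^{-1}s)}{\sin(\cos^{-1}s)}$ is the Tchebyshev polynomial of the second kind. Since $|r|>1$, the integral is an ordinary (nonsingular) integral. *)

theory Defs
  imports "HOL-Analysis.Analysis"
begin

text \<open>Chebyshev polynomial of the second kind, defined as in the paper:
  U_k(s) = sin((k+1) arccos s) / sin(arccos s).  (At s = 1 or s = -1 the
  quotient is 0/0, which Isabelle evaluates to 0; this is a null set.)\<close>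
definition chebU :: "nat \<Rightarrow> real \<Rightarrow> real" where
  "chebU k s = sin ((real k + 1) * arccos s) / sin (arccos s)"

end

theory Submission
  imports Defs
begin


definition qq :: "real \<Rightarrow> real" where "qq r = \<bar>r\<bar> / r * sqrt (r\<^sup>2 - 1)"
definition rh :: "real \<Rightarrow> real" where "rh r = r - qq r"

lemma r2_gt: assumes "\<bar>r\<bar> > 1" shows "r\<^sup>2 > (1::real)"
proof -
  have "1 * 1 < \<bar>r\<bar> * \<bar>r\<bar>" using assms by (intro mult_strict_mono) auto
  then show ?thesis by (simp add: power2_eq_square abs_mult_self_eq)
qed

lemma qq_sq: assumes "\<bar>r\<bar> > 1" shows "(qq r)\<^sup>2 = r\<^sup>2 - 1"
proof -
  have r2: "r\<^sup>2 - 1 \<ge> 0" using r2_gt[OF assms] by simp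
  have rn: "r \<noteq> 0" using assms by auto
  have "(\<bar>r\<bar> / r)\<^sup>2 = 1" using rn by (simp add: power_divide)
  then show ?thesis unfolding qq_def power_mult_distrib using r2 by simp
qed

lemma qq_nz: assumes "\<bar>r\<bar> > 1" shows "qq r \<noteq> 0"
proof
  assume "qq r = 0" then have "r\<^sup>2 - 1 = 0" using qq_sq[OF assms] by simp
  then show False using r2_gt[OF assms] by simp
qed

lemma rh_eq: assumes "\<bar>r\<bar> > 1" shows "(rh r)\<^sup>2 = 2 * r * rh r - 1"
  using qq_sq[OF assms] unfolding rh_def by (simp add: power2_eq_square algebra_simps)

lemma rh_abs: assumes "\<bar>r\<bar> > 1" shows "\<bar>rh r\<bar> < 1"
proof -
  have r2: "1 \<le> r\<^sup>2" using r2_gt[OF assms] by simp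
  have s: "sqrt (r\<^sup>2 - 1) \<ge> 0" using r2 by simp
  have "\<bar>r + qq r\<bar> > 1"
  proof (cases "r > 0")
    case True then have "qq r = sqrt (r\<^sup>2 - 1)" unfolding qq_def using r2 by simp
    moreover have "r > 1" using True assms by simp
    ultimately have "r + qq r > 1" using s by linarith
    then show ?thesis by simp
  next
    case False then have "qq r = - sqrt (r\<^sup>2 - 1)" using assms r2 unfolding qq_def by simp
    moreover have "r < -1" using False assms by simp
    ultimately have "r + qq r < -1" using s by linarith
    then show ?thesis by simp
  qed
  moreover have "rh r * (r + qq r) = 1"
    using qq_sq[OF assms] unfolding rh_def by (simp add: power2_eq_square algebra_simps)
  then have pr: "\<bar>rh r\<bar> * \<bar>r + qq r\<bar> = 1" by (metis abs_mult abs_one)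
  ultimately show ?thesis
  proof -
    assume big: "\<bar>r + qq r\<bar> > 1"
    show ?thesis
    proof (rule ccontr)
      assume "\<not> \<bar>rh r\<bar> < 1" then have "1 \<le> \<bar>rh r\<bar>" by simp
      then have "1 * \<bar>r + qq r\<bar> \<le> \<bar>rh r\<bar> * \<bar>r + qq r\<bar>" by (rule mult_right_mono) simp
      then show False using pr big by simp
    qed
  qed
qed

lemma u_nz: fixes t :: real assumes "\<bar>r\<bar> > 1" shows "r - cos t \<noteq> 0"
proof
  assume "r - cos t = 0" then have "\<bar>r\<bar> = \<bar>cos t\<bar>" by simp
  then show False using assms abs_cos_le_one[of t] by simp
qed

lemma aux_rec: fixes u r c0 c1 :: real assumes "u \<noteq> 0"
  shows "(2 * (r - u) * c1 - c0) / u ^ Suc j = 2 * r * (c1 / u ^ Suc j) - 2 * (c1 / u ^ j) - c0 / u ^ Suc j"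
  using assms by (simp add: field_simps)

definition dI :: "real \<Rightarrow> nat \<Rightarrow> nat \<Rightarrow> real" where
  "dI r m k = integral {0..pi} (\<lambda>t. cos (real k * t) / (r - cos t) ^ m)"

lemma dI_int: assumes "\<bar>r\<bar> > 1"
  shows "(\<lambda>t. cos (real k * t) / (r - cos t) ^ m) integrable_on {0..pi}"
  by (intro integrable_continuous_interval continuous_intros) (use u_nz[OF assms] in auto)

lemma dI_has: assumes "\<bar>r\<bar> > 1"
  shows "((\<lambda>t. cos (real k * t) / (r - cos t) ^ m) has_integral dI r m k) {0..pi}"
  unfolding dI_def using dI_int[OF assms] by (rule integrable_integral)

lemma dI_rec: assumes "\<bar>r\<bar> > 1"
  shows "dI r (Suc j) (k+2) = 2 * r * dI r (Suc j) (k+1) - 2 * dI r j (k+1) - dI r (Suc j) k"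
proof -
  have pt: "cos (real (k+2) * t) / (r - cos t) ^ Suc j =
      2 * r * (cos (real (k+1) * t) / (r - cos t) ^ Suc j) - 2 * (cos (real (k+1) * t) / (r - cos t) ^ j)
      - cos (real k * t) / (r - cos t) ^ Suc j" for t
  proof -
    have c: "cos (real (k+2) * t) = 2 * cos t * cos (real (k+1) * t) - cos (real k * t)"
      using cos_add[of "real (k+1) * t" t] cos_diff[of "real (k+1) * t" t]
      by (simp add: algebra_simps)
    have u: "r - cos t \<noteq> 0" using u_nz[OF assms] .
    show ?thesis using aux_rec[OF u, of r "cos (real (k+1) * t)" "cos (real k * t)" j] unfolding c by simp
  qed
  have "((\<lambda>t. cos (real (k+2) * t) / (r - cos t) ^ Suc j) has_integral
     (2 * r * dI r (Suc j) (k+1) - 2 * dI r j (k+1) - dI r (Suc j) k)) {0..pi}"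
    unfolding pt by (intro has_integral_diff has_integral_mult_right dI_has assms)
  then show ?thesis using dI_has[OF assms, of "k+2" "Suc j"] has_integral_unique by blast
qed

lemma ftc0: fixes f f' :: "real \<Rightarrow> real"
  assumes "\<And>x. (f has_real_derivative f' x) (at x)"
  shows "(f' has_integral (f pi - f 0)) {0..pi}"
proof (rule fundamental_theorem_of_calculus)
  fix x :: real
  have "(f has_real_derivative f' x) (at x within {0..pi})"
    using assms has_field_derivative_at_within by blast
  then show "(f has_vector_derivative f' x) (at x within {0..pi})"
    by (simp add: has_real_derivative_iff_has_vector_derivative)
qed simp

lemma dI_0: assumes "\<bar>r\<bar> > 1" shows "dI r 0 k = (if k = 0 then pi else 0)"
proof (cases "k = 0")
  case True then show ?thesis unfolding dI_def by simp
next
  case False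
  have "((\<lambda>t. cos (real k * t)) has_integral (sin (real k * pi) / real k - sin (real k * 0) / real k)) {0..pi}"
    by (rule ftc0[where f = "\<lambda>t. sin (real k * t) / real k"]) (use False in \<open>auto intro!: derivative_eq_intros\<close>)
  then have "((\<lambda>t. cos (real k * t)) has_integral 0) {0..pi}"
    by (simp add: sin_npi mult.commute)
  then show ?thesis using False unfolding dI_def by (simp add: integral_unique)
qed

lemma dI_1: assumes "\<bar>r\<bar> > 1"
  shows "dI r (Suc j) 1 = r * dI r (Suc j) 0 - dI r j 0"
proof -
  have pt: "cos (real 1 * t) / (r - cos t) ^ Suc j = r * (cos (real 0 * t) / (r - cos t) ^ Suc j) - cos (real 0 * t) / (r - cos t) ^ j" for t
    using u_nz[OF assms, of t] by (simp add: field_simps)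
  have "((\<lambda>t. cos (real 1 * t) / (r - cos t) ^ Suc j) has_integral (r * dI r (Suc j) 0 - dI r j 0)) {0..pi}"
    unfolding pt by (intro has_integral_diff has_integral_mult_right dI_has assms)
  then show ?thesis using dI_has[OF assms, of 1 "Suc j"] has_integral_unique by blast
qed



lemma der: fixes p q r t :: real
  assumes p2: "p\<^sup>2 = 2 * r * p - 1" and qp: "q = r - p" and qnz: "q \<noteq> 0" and d1: "1 - p * cos t \<noteq> 0"
   and u: "r - cos t \<noteq> 0"
  shows "((\<lambda>t. (t + 2 * arctan (p * sin t / (1 - p * cos t))) / q) has_real_derivative (1 / (r - cos t))) (at t)"
proof -
  define D where "D = 1 - p * cos t"
  define S where "S = p * sin t"
  have key: "D\<^sup>2 + S\<^sup>2 = 2 * p * (r - cos t)"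
  proof -
    have e: "(sin t)\<^sup>2 + (cos t)\<^sup>2 = 1" by simp
    show ?thesis unfolding D_def S_def using p2 e by algebra
  qed
  have pnz: "p \<noteq> 0" using p2 by auto
  have dnz: "D \<noteq> 0" using d1 D_def by simp
  have k2: "D\<^sup>2 + S\<^sup>2 \<noteq> 0" using key pnz u by simp
  have dg: "((\<lambda>t. p * sin t / (1 - p * cos t)) has_real_derivative ((p * cos t - p\<^sup>2) / D\<^sup>2)) (at t)"
  proof -
    have "((\<lambda>t. p * sin t / (1 - p * cos t)) has_real_derivative
       ((p * cos t) * (1 - p * cos t) - (p * sin t) * (p * sin t)) / ((1 - p * cos t) * (1 - p * cos t))) (at t)"
      by (rule DERIV_divide) (use d1 in \<open>auto intro!: derivative_eq_intros\<close>)
    moreover have "((p * cos t) * (1 - p * cos t) - (p * sin t) * (p * sin t)) / ((1 - p * cos t) * (1 - p * cos t))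
        = (p * cos t - p\<^sup>2) / D\<^sup>2"
    proof -
      have e: "(sin t)\<^sup>2 + (cos t)\<^sup>2 = 1" by simp
      have "(p * cos t) * (1 - p * cos t) - (p * sin t) * (p * sin t) = p * cos t - p\<^sup>2"
        using e by algebra
      then show ?thesis unfolding D_def by (simp add: power2_eq_square)
    qed
    ultimately show ?thesis by simp
  qed
  have da: "((\<lambda>t. arctan (p * sin t / (1 - p * cos t))) has_real_derivative
      (inverse (1 + (S / D)\<^sup>2) * ((p * cos t - p\<^sup>2) / D\<^sup>2))) (at t)"
    using DERIV_chain2[OF DERIV_arctan dg] unfolding S_def D_def by simp
  have dA: "((\<lambda>t. (t + 2 * arctan (p * sin t / (1 - p * cos t))) / q) has_real_derivative
      ((1 + 2 * (inverse (1 + (S / D)\<^sup>2) * ((p * cos t - p\<^sup>2) / D\<^sup>2))) / q)) (at t)"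
    by (intro DERIV_cdivide DERIV_add DERIV_cmult da DERIV_ident)
  have v1: "inverse (1 + (S / D)\<^sup>2) * ((p * cos t - p\<^sup>2) / D\<^sup>2) = (p * cos t - p\<^sup>2) / (D\<^sup>2 + S\<^sup>2)"
  proof -
    have "1 + (S / D)\<^sup>2 = (D\<^sup>2 + S\<^sup>2) / D\<^sup>2" using dnz by (simp add: field_simps)
    then have i: "inverse (1 + (S / D)\<^sup>2) = D\<^sup>2 / (D\<^sup>2 + S\<^sup>2)" by simp
    have "D\<^sup>2 / (D\<^sup>2 + S\<^sup>2) * ((p * cos t - p\<^sup>2) / D\<^sup>2) = (p * cos t - p\<^sup>2) / (D\<^sup>2 + S\<^sup>2)"
      using dnz k2 by (simp add: divide_simps)
    then show ?thesis unfolding i .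
  qed
  have v2: "(1 + 2 * ((p * cos t - p\<^sup>2) / (D\<^sup>2 + S\<^sup>2))) / q = 1 / (r - cos t)"
  proof -
    have "1 + 2 * ((p * cos t - p\<^sup>2) / (D\<^sup>2 + S\<^sup>2)) = 1 + (cos t - p) / (r - cos t)"
      unfolding key using pnz u by (simp add: field_simps power2_eq_square)
    also have "\<dots> = q / (r - cos t)" using u qp by (simp add: field_simps)
    finally show ?thesis using qnz by simp
  qed
  show ?thesis using dA unfolding v1 v2 .
qed

lemma D1: assumes "\<bar>r\<bar> > 1" shows "dI r 1 0 = pi / qq r"
proof -
  define p where "p = rh r"
  define q where "q = qq r"
  have p2: "p\<^sup>2 = 2 * r * p - 1" using rh_eq[OF assms] p_def by simp
  have pa: "\<bar>p\<bar> < 1" using rh_abs[OF assms] p_def by simp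
  have qp: "q = r - p" unfolding p_def q_def rh_def by simp
  have qnz: "q \<noteq> 0" using qq_nz[OF assms] q_def by simp
  have den: "1 - p * cos t \<noteq> 0" for t
  proof -
    have "\<bar>p * cos t\<bar> \<le> \<bar>p\<bar>" using abs_cos_le_one[of t]
      by (simp add: abs_mult mult_left_le)
    then show ?thesis using pa by linarith
  qed
  define A where "A = (\<lambda>t. (t + 2 * arctan (p * sin t / (1 - p * cos t))) / q)"
  have dA: "(A has_real_derivative (1 / (r - cos t))) (at t)" for t
    unfolding A_def by (rule der[OF p2 qp qnz den u_nz[OF assms]])
  have i1: "((\<lambda>t. 1 / (r - cos t)) has_integral (A pi - A 0)) {0..pi}"
    using ftc0[of A "\<lambda>t. 1 / (r - cos t)"] dA by blast
  have e: "A pi - A 0 = pi / q" unfolding A_def by simp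
  have i2: "((\<lambda>t. 1 / (r - cos t)) has_integral dI r 1 0) {0..pi}" using dI_has[OF assms, of 0 1] by simp
  have "dI r 1 0 = A pi - A 0" using has_integral_unique[OF i2 i1] .
  then show ?thesis using e q_def by simp
qed


lemma h1: fixes u A r :: real assumes "u \<noteq> 0" shows "(A - r * u) / (u * u) = A / u^2 - r / u"
  using assms by (simp add: field_simps power2_eq_square)
lemma h2: fixes u A r :: real assumes "u \<noteq> 0"
  shows "u * (2 * A - 3 * r * u + u^2) / (u^2 * u^2) = 2 * A / u^3 - 3 * r / u^2 + 1 / u"
  using assms by (simp add: field_simps power2_eq_square power3_eq_cube)
lemma derF1: fixes r t :: real assumes u: "r - cos t \<noteq> 0"
  shows "((\<lambda>t. sin t / (r - cos t)) has_real_derivative ((r\<^sup>2 - 1) / (r - cos t)^2 - r / (r - cos t))) (at t)"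
proof -
  have d: "((\<lambda>t. sin t / (r - cos t)) has_real_derivative
     (cos t * (r - cos t) - sin t * sin t) / ((r - cos t) * (r - cos t))) (at t)"
    by (rule DERIV_divide) (use u in \<open>auto intro!: derivative_eq_intros\<close>)
  have e: "(sin t)\<^sup>2 + (cos t)\<^sup>2 = 1" by simp
  have n: "cos t * (r - cos t) - sin t * sin t = (r\<^sup>2 - 1) - r * (r - cos t)" using e by algebra
  have "(cos t * (r - cos t) - sin t * sin t) / ((r - cos t) * (r - cos t)) = (r\<^sup>2 - 1) / (r - cos t)^2 - r / (r - cos t)"
    unfolding n by (rule h1[OF u])
  then show ?thesis using d by simp
qed
lemma derF2: fixes r t :: real assumes u: "r - cos t \<noteq> 0"
  shows "((\<lambda>t. sin t / (r - cos t)^2) has_real_derivative (2 * (r\<^sup>2 - 1) / (r - cos t)^3 - 3 * r / (r - cos t)^2 + 1 / (r - cos t))) (at t)"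
proof -
  have d: "((\<lambda>t. sin t / (r - cos t)^2) has_real_derivative
     (cos t * (r - cos t)^2 - sin t * (2 * (r - cos t) * sin t)) / ((r - cos t)^2 * (r - cos t)^2)) (at t)"
    by (rule DERIV_divide) (use u in \<open>auto intro!: derivative_eq_intros simp: power2_eq_square\<close>)
  have e: "(sin t)\<^sup>2 + (cos t)\<^sup>2 = 1" by simp
  have n: "cos t * (r - cos t)^2 - sin t * (2 * (r - cos t) * sin t) = 
      (r - cos t) * (2 * (r\<^sup>2 - 1) - 3 * r * (r - cos t) + (r - cos t)^2)" using e by algebra
  have "(cos t * (r - cos t)^2 - sin t * (2 * (r - cos t) * sin t)) / ((r - cos t)^2 * (r - cos t)^2)
     = 2 * (r\<^sup>2 - 1) / (r - cos t)^3 - 3 * r / (r - cos t)^2 + 1 / (r - cos t)"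
    unfolding n by (rule h2[OF u])
  then show ?thesis using d by simp
qed

lemma red1: assumes "\<bar>r\<bar> > 1" shows "(r\<^sup>2 - 1) * dI r 2 0 - r * dI r 1 0 = 0"
proof -
  have a: "((\<lambda>t. (r\<^sup>2 - 1) * (cos (real 0 * t) / (r - cos t) ^ 2) - r * (cos (real 0 * t) / (r - cos t) ^ 1))
     has_integral ((r\<^sup>2 - 1) * dI r 2 0 - r * dI r 1 0)) {0..pi}"
    by (intro has_integral_diff has_integral_mult_right dI_has assms)
  have b: "(\<lambda>t. (r\<^sup>2 - 1) * (cos (real 0 * t) / (r - cos t) ^ 2) - r * (cos (real 0 * t) / (r - cos t) ^ 1))
     = (\<lambda>t. (r\<^sup>2 - 1) / (r - cos t) ^ 2 - r / (r - cos t))" by (simp add: fun_eq_iff)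
  have c: "((\<lambda>t. (r\<^sup>2 - 1) / (r - cos t) ^ 2 - r / (r - cos t)) has_integral
      ((\<lambda>t. sin t / (r - cos t)) pi - (\<lambda>t. sin t / (r - cos t)) 0)) {0..pi}"
    by (rule ftc0) (rule derF1[OF u_nz[OF assms]])
  then have c': "((\<lambda>t. (r\<^sup>2 - 1) / (r - cos t) ^ 2 - r / (r - cos t)) has_integral 0) {0..pi}" by simp
  from a[unfolded b] c' show ?thesis by (rule has_integral_unique)
qed

lemma red2: assumes "\<bar>r\<bar> > 1" shows "2 * (r\<^sup>2 - 1) * dI r 3 0 - 3 * r * dI r 2 0 + dI r 1 0 = 0"
proof -
  have a: "((\<lambda>t. 2 * (r\<^sup>2 - 1) * (cos (real 0 * t) / (r - cos t) ^ 3) - 3 * r * (cos (real 0 * t) / (r - cos t) ^ 2)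
      + cos (real 0 * t) / (r - cos t) ^ 1)
     has_integral (2 * (r\<^sup>2 - 1) * dI r 3 0 - 3 * r * dI r 2 0 + dI r 1 0)) {0..pi}"
    by (intro has_integral_add has_integral_diff has_integral_mult_right dI_has assms)
  have b: "(\<lambda>t. 2 * (r\<^sup>2 - 1) * (cos (real 0 * t) / (r - cos t) ^ 3) - 3 * r * (cos (real 0 * t) / (r - cos t) ^ 2)
      + cos (real 0 * t) / (r - cos t) ^ 1)
     = (\<lambda>t. 2 * (r\<^sup>2 - 1) / (r - cos t)^3 - 3 * r / (r - cos t)^2 + 1 / (r - cos t))" by (simp add: fun_eq_iff)
  have c: "((\<lambda>t. 2 * (r\<^sup>2 - 1) / (r - cos t)^3 - 3 * r / (r - cos t)^2 + 1 / (r - cos t)) has_integral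
      ((\<lambda>t. sin t / (r - cos t)^2) pi - (\<lambda>t. sin t / (r - cos t)^2) 0)) {0..pi}"
    by (rule ftc0) (rule derF2[OF u_nz[OF assms]])
  then have c': "((\<lambda>t. 2 * (r\<^sup>2 - 1) / (r - cos t)^3 - 3 * r / (r - cos t)^2 + 1 / (r - cos t)) has_integral 0) {0..pi}" by simp
  from a[unfolded b] c' show ?thesis by (rule has_integral_unique)
qed

definition c1 :: "real \<Rightarrow> real \<Rightarrow> nat \<Rightarrow> real" where "c1 p q k = pi * p^k / q"
definition c2 :: "real \<Rightarrow> real \<Rightarrow> nat \<Rightarrow> real" where "c2 p q k = pi * p^k * (real k * q + (p+q)) / q^3"
definition c3 :: "real \<Rightarrow> real \<Rightarrow> nat \<Rightarrow> real" where
  "c3 p q k = pi/2 * p^k * ((real k^2 - 1) * q^2 + 3 * real k * (p+q) * q + 3 * (p+q)^2) / q^5"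

lemmas csimps = c1_def c2_def c3_def power_add of_nat_add of_nat_numeral of_nat_1 of_nat_0 power_0 power_one_right mult_1_left mult_1_right mult_zero_left power_one one_power2 divide_inverse power_inverse[symmetric] inverse_mult_distrib

context fixes p q :: real assumes h: "1 = p^2 + 2*p*q" and q: "q \<noteq> 0"
begin
lemma qy: "q * inverse q = 1" using q by simp
lemma i2: "2 * inverse (2::real) = 1" by simp

lemma c1_rec: "c1 p q (k+2) = 2*(p+q) * c1 p q (k+1) - c1 p q k"
proof -
  define x where "x = p^k"
  define K where "K = real k"
  define y where "y = inverse q"
  have qy: "q * y = 1" using q y_def by simp
  show ?thesis unfolding csimps x_def[symmetric] K_def[symmetric] y_def[symmetric] using h qy i2 by algebra
qed
lemma c2_rec: "c2 p q (k+2) = 2*(p+q) * c2 p q (k+1) - 2 * c1 p q (k+1) - c2 p q k"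
proof -
  define x where "x = p^k"
  define K where "K = real k"
  define y where "y = inverse q"
  have qy: "q * y = 1" using q y_def by simp
  show ?thesis unfolding csimps x_def[symmetric] K_def[symmetric] y_def[symmetric] using h qy i2 by algebra
qed
lemma c3_rec: "c3 p q (k+2) = 2*(p+q) * c3 p q (k+1) - 2 * c2 p q (k+1) - c3 p q k"
proof -
  define x where "x = p^k"
  define K where "K = real k"
  define y where "y = inverse q"
  have qy: "q * y = 1" using q y_def by simp
  show ?thesis unfolding csimps x_def[symmetric] K_def[symmetric] y_def[symmetric] using h qy i2 by algebra
qed
lemma c1_0: "c1 p q 0 = pi / q" unfolding c1_def by simp
lemma c2_0: "c2 p q 0 = (p+q) * c1 p q 0 / q^2"
  using q by (simp add: c1_def c2_def field_simps power2_eq_square power3_eq_cube)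
lemma c3_0: "c3 p q 0 = (3*(p+q) * c2 p q 0 - c1 p q 0) / (2 * q^2)"
proof -
  define y where "y = inverse q"
  have qy: "q * y = 1" using q y_def by simp
  show ?thesis unfolding csimps y_def[symmetric] apply simp using h qy i2 by algebra
qed
lemma c1_1: "c1 p q 1 = (p+q) * c1 p q 0 - pi"
proof -
  define y where "y = inverse q"
  have qy: "q * y = 1" using q y_def by simp
  show ?thesis unfolding csimps y_def[symmetric] using h qy i2 by algebra
qed
lemma c2_1: "c2 p q 1 = (p+q) * c2 p q 0 - c1 p q 0"
proof -
  define y where "y = inverse q"
  have qy: "q * y = 1" using q y_def by simp
  show ?thesis unfolding csimps y_def[symmetric] apply simp using h qy i2 by algebra
qed
lemma c3_1: "c3 p q 1 = (p+q) * c3 p q 0 - c2 p q 0"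
proof -
  define y where "y = inverse q"
  have qy: "q * y = 1" using q y_def by simp
  show ?thesis unfolding csimps y_def[symmetric] apply simp using h qy i2 by algebra
qed
lemma c_final: "-(1/2) * ((1 - (p+q)^2) * (c3 p q n - c3 p q (n+2)) + 2*(p+q) * (c2 p q n - c2 p q (n+2))
     - (c1 p q n - c1 p q (n+2))) = pi/2 * ((real n^2 + 2*real n + 3) - 3*(real n+1)*(p+q)/q) * p^(n+1)"
proof -
  define x where "x = p^n"
  define K where "K = real n"
  define y where "y = inverse q"
  have qy: "q * y = 1" using q y_def by simp
  show ?thesis unfolding csimps x_def[symmetric] K_def[symmetric] y_def[symmetric] using h qy i2 by algebra
qed
end

lemma closed: assumes "\<bar>r\<bar> > 1"
  shows "dI r 1 k = c1 (rh r) (qq r) k \<and> dI r 2 k = c2 (rh r) (qq r) k \<and> dI r 3 k = c3 (rh r) (qq r) k"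
proof -
  define p where "p = rh r"
  define q where "q = qq r"
  have rpq: "r = p + q" unfolding p_def q_def rh_def by simp
  have qnz: "q \<noteq> 0" using qq_nz[OF assms] q_def by simp
  have q2: "q\<^sup>2 = r\<^sup>2 - 1" using qq_sq[OF assms] q_def by simp
  have h: "1 = p\<^sup>2 + 2 * p * q" using rh_eq[OF assms] rpq p_def by algebra
  have q2nz: "q\<^sup>2 \<noteq> 0" using qnz by simp
  define Q where "Q k \<longleftrightarrow> dI r 1 k = c1 p q k \<and> dI r 2 k = c2 p q k \<and> dI r 3 k = c3 p q k" for k
  have R1: "dI r 1 (k+2) = 2 * r * dI r 1 (k+1) - 2 * dI r 0 (k+1) - dI r 1 k" for k
    using dI_rec[OF assms, of 0 k] by simp
  have R2: "dI r 2 (k+2) = 2 * r * dI r 2 (k+1) - 2 * dI r 1 (k+1) - dI r 2 k" for k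
    using dI_rec[OF assms, of 1 k] by (simp add: numeral_2_eq_2)
  have R3: "dI r 3 (k+2) = 2 * r * dI r 3 (k+1) - 2 * dI r 2 (k+1) - dI r 3 k" for k
    using dI_rec[OF assms, of 2 k] by (simp add: numeral_2_eq_2 numeral_3_eq_3)
  have S1: "dI r 1 1 = r * dI r 1 0 - dI r 0 0" using dI_1[OF assms, of 0] by simp
  have S2: "dI r 2 1 = r * dI r 2 0 - dI r 1 0" using dI_1[OF assms, of 1] by (simp add: numeral_2_eq_2)
  have S3: "dI r 3 1 = r * dI r 3 0 - dI r 2 0" using dI_1[OF assms, of 2] by (simp add: numeral_2_eq_2 numeral_3_eq_3)
  have Z: "dI r 0 (k+1) = 0" for k using dI_0[OF assms, of "k+1"] by simp
  have Z0: "dI r 0 0 = pi" using dI_0[OF assms, of 0] by simp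
  have B1: "dI r 1 0 = c1 p q 0" using D1[OF assms] c1_0[OF h qnz] q_def by simp
  have B2: "dI r 2 0 = c2 p q 0"
  proof -
    have "q\<^sup>2 * dI r 2 0 = r * dI r 1 0" using red1[OF assms] q2 by simp
    then have "dI r 2 0 = r * dI r 1 0 / q\<^sup>2" using q2nz by (simp add: field_simps)
    then show ?thesis using c2_0[OF h qnz] B1 rpq by simp
  qed
  have B3: "dI r 3 0 = c3 p q 0"
  proof -
    have "(2 * q\<^sup>2) * dI r 3 0 = 3 * r * dI r 2 0 - dI r 1 0" using red2[OF assms] q2 by simp
    then have "dI r 3 0 = (3 * r * dI r 2 0 - dI r 1 0) / (2 * q\<^sup>2)" using q2nz by (simp add: field_simps)
    then show ?thesis using c3_0[OF h qnz] B1 B2 rpq by simp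
  qed
  have Q0: "Q 0" unfolding Q_def using B1 B2 B3 by simp
  have Q1: "Q 1" unfolding Q_def using S1 S2 S3 B1 B2 B3 Z0 c1_1[OF h qnz] c2_1[OF h qnz] c3_1[OF h qnz] rpq by simp
  have step: "Q (k+2)" if "Q k" "Q (k+1)" for k
    using that unfolding Q_def using R1[of k] R2[of k] R3[of k] Z[of k]
      c1_rec[OF h qnz, of k] c2_rec[OF h qnz, of k] c3_rec[OF h qnz, of k] rpq by simp
  have "Q k \<and> Q (k+1)" for k
  proof (induction k)
    case 0 then show ?case using Q0 Q1 by simp
  next
    case (Suc k) then show ?case using step[of k] by simp
  qed
  then show ?thesis unfolding Q_def p_def q_def by simp
qed



fun chP :: "nat \<Rightarrow> real \<Rightarrow> real" where
  "chP 0 s = 1"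
| "chP (Suc 0) s = 2 * s"
| "chP (Suc (Suc n)) s = 2 * s * chP (Suc n) s - chP n s"

lemma chP_cos2: "chP n (cos t) * sin t = sin ((real n + 1) * t) \<and> chP (Suc n) (cos t) * sin t = sin ((real n + 2) * t)"
proof (induction n)
  case 0
  have "sin (2 * t) = 2 * sin t * cos t" by (rule sin_double)
  then show ?case by (simp add: algebra_simps)
next
  case (Suc n)
  have e: "sin ((real n + 3) * t) = 2 * cos t * sin ((real n + 2) * t) - sin ((real n + 1) * t)"
    using sin_add[of "(real n + 2) * t" t] sin_diff[of "(real n + 2) * t" t]
    by (simp add: algebra_simps)
  have "chP (Suc (Suc n)) (cos t) * sin t = 2 * cos t * (chP (Suc n) (cos t) * sin t) - chP n (cos t) * sin t"
    by (simp add: algebra_simps)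
  also have "\<dots> = 2 * cos t * sin ((real n + 2) * t) - sin ((real n + 1) * t)"
    using Suc by simp
  also have "\<dots> = sin ((real n + 3) * t)" using e by simp
  finally have "chP (Suc (Suc n)) (cos t) * sin t = sin ((real (Suc n) + 2) * t)" by (simp add: add.commute add.left_commute)
  moreover have "chP (Suc n) (cos t) * sin t = sin ((real (Suc n) + 1) * t)" using Suc by (simp add: add.commute)
  ultimately show ?case by simp
qed

lemma chP_cos: "chP n (cos t) * sin t = sin ((real n + 1) * t)"
  using chP_cos2 by blast

lemma chP_cont2: "continuous_on S (chP n) \<and> continuous_on S (chP (Suc n))"
proof (induction n)
  case 0
  have "chP (Suc 0) = (\<lambda>s. 2 * s)" by (rule ext) simp
  moreover have "chP 0 = (\<lambda>s. 1)" by (rule ext) simp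
  ultimately show ?case by (auto intro!: continuous_intros)
next
  case (Suc n)
  have "chP (Suc (Suc n)) = (\<lambda>s. 2 * s * chP (Suc n) s - chP n s)" by (rule ext) simp
  then show ?case using Suc by (auto intro!: continuous_intros)
qed

lemma chP_cont: "continuous_on S (chP n)"
  using chP_cont2 by blast

lemma chebU_chP: assumes "-1 < s" "s < 1" shows "chebU n s = chP n s"
proof -
  define t where "t = arccos s"
  have ct: "cos t = s" using assms unfolding t_def by simp
  have "0 < t" "t < pi" using arccos_lt_bounded[OF assms] unfolding t_def by auto
  then have st: "sin t > 0" by (simp add: sin_gt_zero)
  have "chebU n s = sin ((real n + 1) * t) / sin t" unfolding chebU_def t_def by simp
  also have "\<dots> = chP n s" using chP_cos[of n t] ct st by (simp add: field_simps)
  finally show ?thesis .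
qed

lemma powr32: fixes x :: real assumes "x \<ge> 0" shows "x powr (3/2) = x * sqrt x"
proof (cases "x = 0")
  case True then show ?thesis by simp
next
  case False
  have "x powr (3/2) = x powr (1 + 1/2)" by simp
  also have "\<dots> = x powr 1 * x powr (1/2)" by (rule powr_add)
  also have "\<dots> = x * sqrt x" using assms False by (simp add: powr_half_sqrt)
  finally show ?thesis .
qed

lemma pw: fixes a b c A B r u :: real
  assumes uc: "u = r - c" and u: "u \<noteq> 0" and ab: "2 * a * b = A - B" and bc: "b^2 + c^2 = 1"
  shows "a * b^3 / (c - r)^3 = -(1/2) * ((1 - r^2) * (A / u^3 - B / u^3) + 2 * r * (A / u^2 - B / u^2) - (A / u^1 - B / u^1))"
proof -
  define y where "y = inverse u"
  have uy: "u * y = 1" using u y_def by simp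
  have "(c - r)^3 = - (u^3)" unfolding uc by algebra
  then have l: "a * b^3 / (c - r)^3 = - (a * b^3 * y^3)" unfolding y_def by (simp add: divide_inverse power_inverse)
  have i2: "2 * inverse (2::real) = 1" by simp
  show ?thesis unfolding l unfolding divide_inverse power_inverse[symmetric] y_def[symmetric]
    using uc uy ab bc i2 by algebra
qed

lemma r_over_q: assumes "\<bar>r\<bar> > 1" shows "r / qq r = \<bar>r\<bar> / sqrt (r\<^sup>2 - 1)"
proof -
  have rn: "r \<noteq> 0" using assms by auto
  have sp: "sqrt (r\<^sup>2 - 1) > 0" using r2_gt[OF assms] by simp
  have "r / qq r = (r * r) / (\<bar>r\<bar> * sqrt (r\<^sup>2 - 1))" unfolding qq_def using rn sp by (simp add: field_simps)
  also have "\<dots> = (\<bar>r\<bar> * \<bar>r\<bar>) / (\<bar>r\<bar> * sqrt (r\<^sup>2 - 1))" by (simp add: abs_mult_self_eq)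
  also have "\<dots> = \<bar>r\<bar> / sqrt (r\<^sup>2 - 1)" using rn by (intro nonzero_mult_divide_mult_cancel_left) simp
  finally show ?thesis .
qed


theorem mainTheorem12:
  fixes n :: nat and r :: real
  assumes "\<bar>r\<bar> > 1"
  shows "((\<lambda>s. chebU n s * (1 - s\<^sup>2) powr (3/2) / (s - r) ^ 3) has_integral
           (pi / 2) * ((real n ^ 2 + 2 * real n + 3)
                       - 3 * (real n + 1) * \<bar>r\<bar> / sqrt (r\<^sup>2 - 1))
           * (r - \<bar>r\<bar> / r * sqrt (r\<^sup>2 - 1)) ^ (n + 1)) {-1..1}"
proof -
  define p where "p = rh r"
  define q where "q = qq r"
  have rpq: "r = p + q" unfolding p_def q_def rh_def by simp
  have qnz: "q \<noteq> 0" using qq_nz[OF assms] q_def by simp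
  have h: "1 = p\<^sup>2 + 2 * p * q" using rh_eq[OF assms] rpq p_def by algebra
  define G where "G s = chP n s * ((1 - s\<^sup>2) * sqrt (1 - s\<^sup>2)) / (s - r) ^ 3" for s
  have sr: "s - r \<noteq> 0" if "s \<in> {-1..1}" for s
  proof
    assume "s - r = 0" then have "\<bar>r\<bar> = \<bar>s\<bar>" by simp
    then show False using that assms by auto
  qed
  have Gc: "continuous_on {-1..1} G" unfolding G_def
    by (intro continuous_intros chP_cont) (use sr in auto)
  have sub: "((\<lambda>x. (- sin x) *\<^sub>R G (cos x)) has_integral
      (integral {cos 0..cos pi} G - integral {cos pi..cos 0} G)) {0..pi}"
  proof (rule has_integral_substitution_general[of "{}" 0 pi cos "-1" 1 G])
    show "cos ` {0..pi} \<subseteq> {-1..1}" by auto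
    show "continuous_on {-1..1} G" by (rule Gc)
    show "continuous_on {0..pi} cos" by (intro continuous_intros)
    fix x show "(cos has_real_derivative - sin x) (at x within {0..pi})"
      by (intro derivative_eq_intros) auto
  qed auto
  then have sub2: "((\<lambda>x. - (sin x * G (cos x))) has_integral (- integral {-1..1} G)) {0..pi}" by simp
  have sub3: "((\<lambda>x. sin x * G (cos x)) has_integral integral {-1..1} G) {0..pi}"
    using has_integral_neg[OF sub2] by simp
  define V where "V = -(1/2) * ((1 - r\<^sup>2) * (dI r 3 n - dI r 3 (n+2)) + 2 * r * (dI r 2 n - dI r 2 (n+2))
      - (dI r 1 n - dI r 1 (n+2)))"
  have hI: "((\<lambda>x. -(1/2) * ((1 - r\<^sup>2) * (cos (real n * x) / (r - cos x)^3 - cos (real (n+2) * x) / (r - cos x)^3)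
      + 2 * r * (cos (real n * x) / (r - cos x)^2 - cos (real (n+2) * x) / (r - cos x)^2)
      - (cos (real n * x) / (r - cos x)^1 - cos (real (n+2) * x) / (r - cos x)^1))) has_integral V) {0..pi}"
    unfolding V_def by (intro has_integral_mult_right has_integral_diff has_integral_add dI_has assms)
  have th: "((\<lambda>x. sin x * G (cos x)) has_integral V) {0..pi}"
  proof (rule has_integral_spike_finite[OF finite.emptyI _ hI])
    fix x assume "x \<in> {0..pi} - {}"
    then have x: "0 \<le> x" "x \<le> pi" by auto
    have sx: "sin x \<ge> 0" using x by (simp add: sin_ge_zero)
    have c2: "1 - (cos x)\<^sup>2 = (sin x)\<^sup>2" by (simp add: sin_squared_eq)
    have sq: "sqrt (1 - (cos x)\<^sup>2) = sin x" unfolding c2 using sx by simp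
    have "sin x * G (cos x) = (chP n (cos x) * sin x) * (sin x)^3 / (cos x - r)^3"
      unfolding G_def c2 using sx by (simp add: abs_of_nonneg power3_eq_cube power2_eq_square algebra_simps)
    also have "\<dots> = sin ((real n + 1) * x) * (sin x)^3 / (cos x - r)^3" by (simp add: chP_cos)
    also have "\<dots> = -(1/2) * ((1 - r\<^sup>2) * (cos (real n * x) / (r - cos x)^3 - cos (real (n+2) * x) / (r - cos x)^3)
      + 2 * r * (cos (real n * x) / (r - cos x)^2 - cos (real (n+2) * x) / (r - cos x)^2)
      - (cos (real n * x) / (r - cos x)^1 - cos (real (n+2) * x) / (r - cos x)^1))"
    proof (rule pw)
      show "r - cos x \<noteq> 0" by (rule u_nz[OF assms])
      show "(sin x)\<^sup>2 + (cos x)\<^sup>2 = 1" by simp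
      have e1: "real n * x = (real n + 1) * x - x" by (simp add: algebra_simps)
      have e2: "real (n+2) * x = (real n + 1) * x + x" by (simp add: algebra_simps)
      show "2 * sin ((real n + 1) * x) * sin x = cos (real n * x) - cos (real (n+2) * x)"
        unfolding e1 e2 cos_diff cos_add by simp
    qed simp
    finally show "sin x * G (cos x) = -(1/2) * ((1 - r\<^sup>2) * (cos (real n * x) / (r - cos x)^3 - cos (real (n+2) * x) / (r - cos x)^3)
      + 2 * r * (cos (real n * x) / (r - cos x)^2 - cos (real (n+2) * x) / (r - cos x)^2)
      - (cos (real n * x) / (r - cos x)^1 - cos (real (n+2) * x) / (r - cos x)^1))" .
  qed
  have IV: "integral {-1..1} G = V" using has_integral_unique[OF sub3 th] .
  have VV: "V = pi/2 * ((real n^2 + 2*real n + 3) - 3*(real n+1)*(p+q)/q) * p^(n+1)"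
  proof -
    have "V = -(1/2) * ((1 - r^2) * (c3 p q n - c3 p q (n+2)) + 2*r * (c2 p q n - c2 p q (n+2))
     - (c1 p q n - c1 p q (n+2)))"
      unfolding V_def using closed[OF assms, of n, folded p_def q_def] closed[OF assms, of "n+2", folded p_def q_def]
      by presburger
    also have "\<dots> = -(1/2) * ((1 - (p+q)^2) * (c3 p q n - c3 p q (n+2)) + 2*(p+q) * (c2 p q n - c2 p q (n+2))
     - (c1 p q n - c1 p q (n+2)))" by (simp only: rpq)
    also have "\<dots> = pi/2 * ((real n^2 + 2*real n + 3) - 3*(real n+1)*(p+q)/q) * p^(n+1)"
      by (rule c_final[OF h qnz])
    finally show ?thesis .
  qed
  have RHS: "pi/2 * ((real n^2 + 2*real n + 3) - 3*(real n+1)*(p+q)/q) * p^(n+1) =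
      (pi / 2) * ((real n ^ 2 + 2 * real n + 3) - 3 * (real n + 1) * \<bar>r\<bar> / sqrt (r\<^sup>2 - 1))
           * (r - \<bar>r\<bar> / r * sqrt (r\<^sup>2 - 1)) ^ (n + 1)"
  proof -
    have a: "3*(real n+1)*(p+q)/q = 3 * (real n + 1) * \<bar>r\<bar> / sqrt (r\<^sup>2 - 1)"
      using r_over_q[OF assms] rpq q_def by (metis times_divide_eq_right)
    have b: "p = r - \<bar>r\<bar> / r * sqrt (r\<^sup>2 - 1)" unfolding p_def rh_def qq_def ..
    show ?thesis unfolding a unfolding b ..
  qed
  have GI: "(G has_integral (integral {-1..1} G)) {-1..1}"
    using integrable_continuous_interval[OF Gc] by (rule integrable_integral)
  have GI2: "(G has_integral ((pi / 2) * ((real n ^ 2 + 2 * real n + 3) - 3 * (real n + 1) * \<bar>r\<bar> / sqrt (r\<^sup>2 - 1))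
           * (r - \<bar>r\<bar> / r * sqrt (r\<^sup>2 - 1)) ^ (n + 1))) {-1..1}"
    using GI unfolding IV VV RHS .
  show ?thesis
  proof (rule has_integral_spike_finite[of "{-1, 1}" _ _ G])
    fix s assume "s \<in> {-1..(1::real)} - {-1, 1}"
    then have s: "-1 < s" "s < 1" by auto
    have "1 - s\<^sup>2 \<ge> 0" using s by (simp add: abs_square_le_1 abs_le_iff)
    then show "chebU n s * (1 - s\<^sup>2) powr (3/2) / (s - r) ^ 3 = G s"
      unfolding G_def using chebU_chP[OF s] powr32 by simp
  qed (use GI2 in auto)
qed

end
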